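(* Let $N$ and $N_1$ be compactly supported distribution functions taking finitely many values. Put ${\scriptstyle\Delta}N=N_1-N$ and $N_\theta=N+\theta\,{\scriptstyle\Delta}N$, and define $$\mathbf{u}_\theta=\int_0^\infty N_\theta(t)\,dt,\qquad {\scriptstyle\Delta}\mathbf{u}=\int_0^\infty{\scriptstyle\Delta}N(t)\,dt,\qquad \mathbf{u}_{\scriptstyle\Delta}=\int_0^\infty|{\scriptstyle\Delta}N(t)|\,dt .$$ Then for $\theta\in(0,1)$, $$-\frac{d^2\,\mathbf{u}^*(N_\theta)}{d\theta^2}\ge\frac{(\mathbf{u}_{\scriptstyle\Delta})^2}{\mathbf{u}_\theta}\ge\frac{|{\scriptstyle\Delta}\mathbf{u}|^2}{\mathbf{u}_\theta}.$$
   Context: A distribution function is a nonincreasing function $N:[0,\infty)\to[0,1]$; such functions arise as normalized distribution functions $t\mapsto|I|^{-1}|\{x\in I:u(x)>t\}|$. For a distribution function $N$, $$\mathbf{u}^*(N)=\int_0^\infty\psi_0(N(t))\,dt,\qquad \psi_0(s)=s\ln(e/s).$$ *)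

theory Defs
  imports "HOL-Analysis.Analysis"
begin

definition distribution_function :: "(real \<Rightarrow> real) \<Rightarrow> bool" where
  "distribution_function N \<longleftrightarrow>
     (\<forall>t\<ge>0. 0 \<le> N t \<and> N t \<le> 1) \<and>
     (\<forall>s t. 0 \<le> s \<longrightarrow> s \<le> t \<longrightarrow> N t \<le> N s)"

definition compactly_supported_df :: "(real \<Rightarrow> real) \<Rightarrow> bool" where
  "compactly_supported_df N \<longleftrightarrow> (\<exists>T\<ge>0. \<forall>t\<ge>T. N t = 0)"

definition finitely_valued_df :: "(real \<Rightarrow> real) \<Rightarrow> bool" where
  "finitely_valued_df N \<longleftrightarrow> finite (N ` {0..})"

definition psi0 :: "real \<Rightarrow> real" where
  "psi0 s = s * ln (exp 1 / s)"

definition ustar :: "(real \<Rightarrow> real) \<Rightarrow> real" where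
  "ustar N = integral {0..} (\<lambda>t. psi0 (N t))"

end

theory Submission
  imports Defs
begin
definition Lset :: "(real\<Rightarrow>real) \<Rightarrow> (real\<Rightarrow>real) \<Rightarrow> real\<times>real \<Rightarrow> real set" where
  "Lset N N1 p = {t. 0 \<le> t \<and> (N t, N1 t) = p}"

lemma Lset_lmeasurable:
  assumes "distribution_function N" "compactly_supported_df N"
    "distribution_function N1" "compactly_supported_df N1" "p \<noteq> (0,0)"
  shows "Lset N N1 p \<in> lmeasurable"
proof -
  obtain T0 where T0: "T0 \<ge> 0" "\<forall>t\<ge>T0. N t = 0" using assms(2) unfolding compactly_supported_df_def by blast
  obtain T1 where T1: "T1 \<ge> 0" "\<forall>t\<ge>T1. N1 t = 0" using assms(4) unfolding compactly_supported_df_def by blast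
  have mono: "N y = N x" "N1 y = N1 x" if "0 \<le> x" "x \<le> y" "y \<le> z" "N x = N z" "N1 x = N1 z" for x y z
    using assms(1,3) that unfolding distribution_function_def by (smt (verit))+
  have "is_interval (Lset N N1 p)"
    unfolding is_interval_1 Lset_def
    using mono by (smt (verit, best) mem_Collect_eq prod.inject)
  hence "Lset N N1 p \<in> sets borel" by (rule real_interval_borel_measurable)
  hence m: "Lset N N1 p \<in> sets lebesgue" by simp
  have "Lset N N1 p \<subseteq> {0..max T0 T1}"
  proof
    fix t assume t: "t \<in> Lset N N1 p"
    show "t \<in> {0..max T0 T1}"
    proof (rule ccontr)
      assume "t \<notin> {0..max T0 T1}"
      hence "t \<ge> T0" "t \<ge> T1" using t unfolding Lset_def by auto
      hence "N t = 0" "N1 t = 0" using T0 T1 by auto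
      thus False using t assms(5) unfolding Lset_def by auto
    qed
  qed
  hence "bounded (Lset N N1 p)" by (meson bounded_closed_interval bounded_subset)
  thus ?thesis using m bounded_set_imp_lmeasurable by blast
qed

definition Pset :: "(real\<Rightarrow>real) \<Rightarrow> (real\<Rightarrow>real) \<Rightarrow> (real\<times>real) set" where
  "Pset N N1 = (\<lambda>t. (N t, N1 t)) ` {0..} - {(0,0)}"

lemma Pset_finite:
  assumes "finitely_valued_df N" "finitely_valued_df N1"
  shows "finite (Pset N N1)"
proof -
  have "Pset N N1 \<subseteq> N ` {0..} \<times> N1 ` {0..}" unfolding Pset_def by auto
  thus ?thesis using assms unfolding finitely_valued_df_def by (meson finite_SigmaI finite_subset)
qed

lemma decomp:
  assumes "distribution_function N" "compactly_supported_df N" "finitely_valued_df N"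
    and "distribution_function N1" "compactly_supported_df N1" "finitely_valued_df N1"
    and g0: "g 0 0 = 0"
  shows "((\<lambda>t. g (N t) (N1 t)) has_integral
           (\<Sum>p\<in>Pset N N1. g (fst p) (snd p) * measure lebesgue (Lset N N1 p))) {0..}"
proof -
  have each: "((\<lambda>t. g (fst p) (snd p) * indicator (Lset N N1 p) t) has_integral
      g (fst p) (snd p) * measure lebesgue (Lset N N1 p)) {0..}" if p: "p \<in> Pset N N1" for p
  proof -
    have "Lset N N1 p \<in> lmeasurable"
      using Lset_lmeasurable assms p unfolding Pset_def by blast
    hence "(indicator (Lset N N1 p) has_integral measure lebesgue (Lset N N1 p)) UNIV"
      using lmeasurable_iff_has_integral by blast
    moreover have "(\<lambda>t. if t \<in> {0..} then indicator (Lset N N1 p) t else 0) = indicator (Lset N N1 p)"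
      by (auto simp: Lset_def indicator_def)
    ultimately have "(indicator (Lset N N1 p) has_integral measure lebesgue (Lset N N1 p)) {0..}"
      using has_integral_restrict_UNIV by metis
    thus ?thesis by (rule has_integral_mult_right)
  qed
  have "((\<lambda>t. \<Sum>p\<in>Pset N N1. g (fst p) (snd p) * indicator (Lset N N1 p) t) has_integral
           (\<Sum>p\<in>Pset N N1. g (fst p) (snd p) * measure lebesgue (Lset N N1 p))) {0..}"
    using Pset_finite[OF assms(3,6)] each by (intro has_integral_sum) auto
  moreover have "(\<Sum>p\<in>Pset N N1. g (fst p) (snd p) * indicator (Lset N N1 p) t) = g (N t) (N1 t)"
    if t: "t \<in> {0..}" for t
  proof -
    have "(\<Sum>p\<in>Pset N N1. g (fst p) (snd p) * indicator (Lset N N1 p) t)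
        = (\<Sum>p\<in>Pset N N1. if p = (N t, N1 t) then g (N t) (N1 t) else 0)"
      using t by (intro sum.cong) (auto simp: Lset_def indicator_def)
    also have "\<dots> = g (N t) (N1 t)"
      using Pset_finite[OF assms(3,6)] t g0 by (auto simp: sum.delta' Pset_def)
    finally show ?thesis .
  qed
  ultimately show ?thesis by (rule has_integral_eq[rotated]) 
qed

lemma cs_aux:
  fixes n m d :: "'a \<Rightarrow> real"
  assumes "finite P" "\<And>p. p \<in> P \<Longrightarrow> n p > 0" "\<And>p. p \<in> P \<Longrightarrow> m p \<ge> 0"
  shows "(\<Sum>p\<in>P. \<bar>d p\<bar> * m p)\<^sup>2 / (\<Sum>p\<in>P. n p * m p) \<le> (\<Sum>p\<in>P. (d p)\<^sup>2 / n p * m p)"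
proof -
  define A where "A = (\<Sum>p\<in>P. (d p)\<^sup>2 / n p * m p)"
  define B where "B = (\<Sum>p\<in>P. \<bar>d p\<bar> * m p)"
  define C where "C = (\<Sum>p\<in>P. n p * m p)"
  have A0: "A \<ge> 0" unfolding A_def
  proof (rule sum_nonneg)
    fix p assume "p \<in> P"
    hence "n p > 0" "m p \<ge> 0" using assms by auto
    thus "0 \<le> (d p)\<^sup>2 / n p * m p" by simp
  qed
  have C0: "C \<ge> 0" unfolding C_def using assms by (intro sum_nonneg) (simp add: less_imp_le)
  show ?thesis
  proof (cases "C = 0")
    case True thus ?thesis using A0 by (simp add: A_def C_def)
  next
    case False
    with C0 have Cp: "C > 0" by simp
    define c where "c = B / C"
    have "0 \<le> (\<Sum>p\<in>P. (\<bar>d p\<bar> - c * n p)\<^sup>2 / n p * m p)"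
      using assms by (intro sum_nonneg) (simp add: less_imp_le)
    also have "\<dots> = (\<Sum>p\<in>P. (d p)\<^sup>2 / n p * m p - 2 * c * (\<bar>d p\<bar> * m p) + c\<^sup>2 * (n p * m p))"
    proof (intro sum.cong refl)
      fix p assume "p \<in> P"
      hence "n p \<noteq> 0" using assms(2) by force
      thus "(\<bar>d p\<bar> - c * n p)\<^sup>2 / n p * m p = (d p)\<^sup>2 / n p * m p - 2 * c * (\<bar>d p\<bar> * m p) + c\<^sup>2 * (n p * m p)"
        by (simp add: field_simps power2_eq_square)
    qed
    also have "\<dots> = A - 2 * c * B + c\<^sup>2 * C"
      unfolding A_def B_def C_def by (simp add: sum.distrib sum_subtractf sum_distrib_left)
    also have "\<dots> = A - B\<^sup>2 / C" using Cp unfolding c_def by (simp add: field_simps power2_eq_square)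
    finally show ?thesis unfolding A_def B_def C_def by simp
  qed
qed

lemma psi0_comp_deriv:
  assumes "a + x * d > 0"
  shows "((\<lambda>\<tau>. psi0 (a + \<tau> * d)) has_real_derivative (ln (exp 1 / (a + x * d)) - 1) * d) (at x)"
  unfolding psi0_def
  using assms apply (auto intro!: derivative_eq_intros)
  by (simp_all add: algebra_simps power2_eq_square)

lemma lnpart_deriv:
  assumes "a + x * d > 0"
  shows "((\<lambda>\<tau>. (ln (exp 1 / (a + \<tau> * d)) - 1) * d) has_real_derivative - d\<^sup>2 / (a + x * d)) (at x)"
  using assms apply (auto intro!: derivative_eq_intros)
  by (simp_all add: algebra_simps power2_eq_square)

theorem lemma5p1:
  fixes N N1 :: "real \<Rightarrow> real" and \<theta> :: real
  assumes "distribution_function N" "compactly_supported_df N" "finitely_valued_df N"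
    and "distribution_function N1" "compactly_supported_df N1" "finitely_valued_df N1"
    and "0 < \<theta>" "\<theta> < 1"
  shows "let DN = (\<lambda>t. N1 t - N t);
             Nth = (\<lambda>\<tau> t. N t + \<tau> * DN t);
             F = (\<lambda>\<tau>. ustar (Nth \<tau>));
             u\<theta> = integral {0..} (Nth \<theta>);
             Du = integral {0..} DN;
             uD = integral {0..} (\<lambda>t. \<bar>DN t\<bar>)
         in (\<forall>x\<in>{0<..<1}. F differentiable (at x)) \<and>
            deriv F differentiable (at \<theta>) \<and>
            - deriv (deriv F) \<theta> \<ge> uD\<^sup>2 / u\<theta> \<and>
            uD\<^sup>2 / u\<theta> \<ge> \<bar>Du\<bar>\<^sup>2 / u\<theta>"
proof -
  define P where "P = Pset N N1"
  define m where "m p = measure lebesgue (Lset N N1 p)" for p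
  define n where "n (x::real) (p::real\<times>real) = fst p + x * (snd p - fst p)" for x p
  define d where "d (p::real\<times>real) = snd p - fst p" for p
  define F where "F = (\<lambda>\<tau>. ustar (\<lambda>t. N t + \<tau> * (N1 t - N t)))"
  define G where "G x = (\<Sum>p\<in>P. (ln (exp 1 / n x p) - 1) * d p * m p)" for x
  define H where "H = (\<Sum>p\<in>P. - (d p)\<^sup>2 / n \<theta> p * m p)"
  have finP: "finite P" unfolding P_def using Pset_finite assms(3,6) by blast
  have m0: "m p \<ge> 0" for p unfolding m_def by simp
  have pos: "n x p > 0" if "p \<in> P" "x \<in> {0<..<1}" for x p
  proof -
    have pp: "p \<in> (\<lambda>t. (N t, N1 t)) ` {0..}" "p \<noteq> (0,0)" using that(1) unfolding P_def Pset_def by simp_all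
    then obtain t where t: "t \<ge> 0" "p = (N t, N1 t)" by auto
    note t = t pp(2)
    have "0 \<le> N t" "N t \<le> 1" "0 \<le> N1 t" "N1 t \<le> 1"
      using assms(1,4) t(1) unfolding distribution_function_def by auto
    moreover have "n x p = (1 - x) * N t + x * N1 t" unfolding n_def t(2) by (simp add: algebra_simps)
    moreover have "N t \<noteq> 0 \<or> N1 t \<noteq> 0" using t by auto
    ultimately show ?thesis using that(2)
      by (smt (verit, best) greaterThanLessThan_iff mult_nonneg_nonneg mult_pos_pos)
  qed
  have Feq: "F = (\<lambda>\<tau>. \<Sum>p\<in>P. psi0 (fst p + \<tau> * (snd p - fst p)) * m p)"
  proof
    fix \<tau>
    have "((\<lambda>t. psi0 (N t + \<tau> * (N1 t - N t))) has_integral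
           (\<Sum>p\<in>P. psi0 (fst p + \<tau> * (snd p - fst p)) * m p)) {0..}"
      using decomp[OF assms(1-6), of "\<lambda>a b. psi0 (a + \<tau> * (b - a))"]
      unfolding P_def m_def by (simp add: psi0_def)
    thus "F \<tau> = (\<Sum>p\<in>P. psi0 (fst p + \<tau> * (snd p - fst p)) * m p)"
      unfolding F_def ustar_def by (simp add: integral_unique)
  qed
  have dF: "(F has_real_derivative G x) (at x)" if x: "x \<in> {0<..<1}" for x
    unfolding Feq G_def
  proof (intro DERIV_sum)
    fix p assume p: "p \<in> P"
    have "((\<lambda>\<tau>. psi0 (fst p + \<tau> * (snd p - fst p))) has_real_derivative (ln (exp 1 / n x p) - 1) * d p) (at x)"
      using psi0_comp_deriv[of "fst p" x "snd p - fst p"] pos[OF p x] unfolding n_def d_def by simp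
    thus "((\<lambda>\<tau>. psi0 (fst p + \<tau> * (snd p - fst p)) * m p) has_real_derivative (ln (exp 1 / n x p) - 1) * d p * m p) (at x)"
      by (rule DERIV_cmult_right)
  qed
  have dG: "(G has_real_derivative H) (at \<theta>)"
    unfolding G_def H_def
  proof (intro DERIV_sum)
    fix p assume p: "p \<in> P"
    have "((\<lambda>\<tau>. (ln (exp 1 / n \<tau> p) - 1) * d p) has_real_derivative - (d p)\<^sup>2 / n \<theta> p) (at \<theta>)"
      using lnpart_deriv[of "fst p" \<theta> "snd p - fst p"] pos[OF p] assms(7,8) unfolding n_def d_def by simp
    thus "((\<lambda>\<tau>. (ln (exp 1 / n \<tau> p) - 1) * d p * m p) has_real_derivative - (d p)\<^sup>2 / n \<theta> p * m p) (at \<theta>)"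
      by (rule DERIV_cmult_right)
  qed
  have dF': "deriv F x = G x" if "x \<in> {0<..<1}" for x using dF[OF that] by (rule DERIV_imp_deriv)
  have ddF: "(deriv F has_real_derivative H) (at \<theta>)"
    by (rule has_field_derivative_transform_within_open[OF dG, of "{0<..<1}"]) (use assms(7,8) dF' in auto)
  have ddF': "deriv (deriv F) \<theta> = H" using ddF by (rule DERIV_imp_deriv)
  have u1: "integral {0..} (\<lambda>t. N t + \<theta> * (N1 t - N t)) = (\<Sum>p\<in>P. n \<theta> p * m p)"
    using decomp[OF assms(1-6), of "\<lambda>a b. a + \<theta> * (b - a)"]
    unfolding P_def m_def n_def by (simp add: integral_unique)
  have u2: "integral {0..} (\<lambda>t. N1 t - N t) = (\<Sum>p\<in>P. d p * m p)"
    using decomp[OF assms(1-6), of "\<lambda>a b. b - a"]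
    unfolding P_def m_def d_def by (simp add: integral_unique)
  have u3: "integral {0..} (\<lambda>t. \<bar>N1 t - N t\<bar>) = (\<Sum>p\<in>P. \<bar>d p\<bar> * m p)"
    using decomp[OF assms(1-6), of "\<lambda>a b. \<bar>b - a\<bar>"]
    unfolding P_def m_def d_def by (simp add: integral_unique)
  have ineq1: "(\<Sum>p\<in>P. \<bar>d p\<bar> * m p)\<^sup>2 / (\<Sum>p\<in>P. n \<theta> p * m p) \<le> - H"
  proof -
    have "(\<Sum>p\<in>P. \<bar>d p\<bar> * m p)\<^sup>2 / (\<Sum>p\<in>P. n \<theta> p * m p) \<le> (\<Sum>p\<in>P. (d p)\<^sup>2 / n \<theta> p * m p)"
      by (rule cs_aux[OF finP]) (use pos assms(7,8) m0 in auto)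
    also have "\<dots> = - H" unfolding H_def by (simp add: sum_negf)
    finally show ?thesis .
  qed
  have ineq2: "\<bar>\<Sum>p\<in>P. d p * m p\<bar>\<^sup>2 / (\<Sum>p\<in>P. n \<theta> p * m p) \<le> (\<Sum>p\<in>P. \<bar>d p\<bar> * m p)\<^sup>2 / (\<Sum>p\<in>P. n \<theta> p * m p)"
  proof (rule divide_right_mono)
    have "\<bar>\<Sum>p\<in>P. d p * m p\<bar> \<le> (\<Sum>p\<in>P. \<bar>d p * m p\<bar>)" by (rule sum_abs)
    also have "\<dots> = (\<Sum>p\<in>P. \<bar>d p\<bar> * m p)" using m0 by (simp add: abs_mult)
    finally have h: "\<bar>\<Sum>p\<in>P. d p * m p\<bar> \<le> (\<Sum>p\<in>P. \<bar>d p\<bar> * m p)" .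
    show "\<bar>\<Sum>p\<in>P. d p * m p\<bar>\<^sup>2 \<le> (\<Sum>p\<in>P. \<bar>d p\<bar> * m p)\<^sup>2"
      by (rule power_mono[OF h abs_ge_zero])
    show "0 \<le> (\<Sum>p\<in>P. n \<theta> p * m p)"
      using pos assms(7,8) m0 by (intro sum_nonneg) (simp add: less_imp_le)
  qed
  show ?thesis
    unfolding Let_def F_def[symmetric] u1 u2 u3 ddF'
    using dF ddF ineq1 ineq2 real_differentiable_def by blast
qed
end
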